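(* For all integers $m\ge1$, $K(2^m,4)\neq K(2^m,1,1)$. Moreover, if $m<14$ then $K(2^m,4)<K(2^m,1,1)$, and if $m\ge 14$ then $K(2^m,4)>K(2^m,1,1)$.
   Context: $2^m$ denotes the list $2,2,\ldots,2$ ($m$ entries). For a list $(c_1,\ldots,c_k)$ of positive integers with even sum and $n=\frac12(c_1+\cdots+c_k+2)$, $K(c_1,\ldots,c_k)$ is the number of Young tableaux of shape $(n-1,n-1)$ and content $(c_1,\ldots,c_k)$: two-rowed arrays of integers, each row of length $n-1$, weakly increasing along rows, strictly increasing down columns, with exactly $c_i$ occurrences of $i$ for each $i$ (this number is $0$ if no such tableau exists). *)

theory Defs
  imports Main
begin

text \<open>A Young tableau of shape (L,L) (two rows of length L) with entries in {1..k},
  represented as a function T row col, with rows 0,1 and columns 0..L-1;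
  T is required to be 0 outside this domain so the set of tableaux is finite.
  Content cs = [c_1,...,c_k]: value i+1 occurs exactly cs!i times.\<close>

definition two_row_tableaux :: "nat list \<Rightarrow> (nat \<Rightarrow> nat \<Rightarrow> nat) set" where
  "two_row_tableaux cs =
    (let k = length cs; L = (sum_list cs + 2) div 2 - 1 in
     {T. (\<forall>i j. \<not> (i < 2 \<and> j < L) \<longrightarrow> T i j = 0)
       \<and> (\<forall>i<2. \<forall>j<L. 1 \<le> T i j \<and> T i j \<le> k)
       \<and> (\<forall>i<2. \<forall>j. Suc j < L \<longrightarrow> T i j \<le> T i (Suc j))
       \<and> (\<forall>j<L. T 0 j < T 1 j)
       \<and> (\<forall>v<k. card {(i, j). i < 2 \<and> j < L \<and> T i j = Suc v} = cs ! v)})"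

definition Kostka2 :: "nat list \<Rightarrow> nat" where
  "Kostka2 cs = card (two_row_tableaux cs)"

end

theory Submission
  imports Defs
begin



fun t :: "nat \<Rightarrow> int \<Rightarrow> int" where
  "t 0 k = (if k = 0 then 1 else 0)"
| "t (Suc m) k = t m (k - 1) + t m k + t m (k + 1)"

lemma t_sym: "t m (- k) = t m k"
proof (induction m arbitrary: k)
  case 0 then show ?case by simp
next
  case (Suc m)
  have "t m (- k - 1) = t m (k + 1)" using Suc[of "k+1"] by simp
  moreover have "t m (- k + 1) = t m (k - 1)" using Suc[of "k - 1"] by simp
  ultimately show ?case using Suc[of k] by simp
qed

lemma t_zero: "\<bar>k\<bar> > int m \<Longrightarrow> t m k = 0"
proof (induction m arbitrary: k)
  case 0 then show ?case by simp
next
  case (Suc m)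
  then show ?case by simp
qed

lemma t_nonneg: "t m k \<ge> 0"
  by (induction m arbitrary: k) auto

definition A3 :: "nat \<Rightarrow> int \<Rightarrow> int" where
  "A3 m k = (int m + k + 1) * t m (k + 1) - (int m - k + 1) * t m (k - 1) + k * t m k"

lemma A3_zero: "A3 m k = 0"
proof (induction m arbitrary: k)
  case 0 then show ?case by (simp add: A3_def)
next
  case (Suc m)
  have e: "A3 (Suc m) k = A3 m (k - 1) + A3 m k + A3 m (k + 1)"
    unfolding A3_def by (simp add: algebra_simps)
  show ?case using e Suc[of "k-1"] Suc[of k] Suc[of "k+1"] by simp
qed

lemma t_rec3: "(int m + k + 1) * t m (k + 1) = (int m - k + 1) * t m (k - 1) - k * t m k"
  using A3_zero[of m k] unfolding A3_def by simp

lemma t2: "(int m + 2) * t m 2 = int m * t m 0 - t m 1"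
  using t_rec3[of m 1] by (simp add: add.commute)

lemma t3: "(int m + 3) * t m 3 = (int m - 1) * t m 1 - 2 * t m 2"
  using t_rec3[of m 2] by (simp add: add.commute)

fun tt :: "nat \<Rightarrow> int \<times> int" where
  "tt 0 = (1, 0)"
| "tt (Suc m) = (case tt m of (x, y) \<Rightarrow> (x + 2 * y, ((2 * int m + 2) * x + (int m + 1) * y) div (int m + 2)))"

lemma tt_t: "tt m = (t m 0, t m 1)"
proof (induction m)
  case 0 then show ?case by simp
next
  case (Suc m)
  have a: "t (Suc m) 0 = t m 0 + 2 * t m 1" using t_sym[of m 1] by simp
  have "(int m + 2) * t (Suc m) 1 = (2 * int m + 2) * t m 0 + (int m + 1) * t m 1"
    using t2[of m] by (simp add: algebra_simps)
  hence b: "t (Suc m) 1 = ((2 * int m + 2) * t m 0 + (int m + 1) * t m 1) div (int m + 2)"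
    by (metis add_nonneg_pos nonzero_mult_div_cancel_left of_nat_0_le_iff zero_less_numeral less_irrefl)
  show ?case using Suc a b by simp
qed

definition sgnE :: "nat \<Rightarrow> int" where
  "sgnE m = (case tt m of (x, y) \<Rightarrow> (int m * int m + 3 * int m - 6) * x - (int m * int m + 3 * int m + 6) * y)"






lemma base33: "tt 33 = (470139239360787, 459807788441331)" by code_simp

lemma small: "list_all (\<lambda>m. sgnE m < 0) [1..<14]" by code_simp
lemma small2: "list_all (\<lambda>m. sgnE m > 0) [14..<34]" by code_simp


definition gen :: "nat list \<Rightarrow> nat \<Rightarrow> nat \<Rightarrow> (nat \<Rightarrow> nat \<Rightarrow> nat) set" where
  "gen cs p q = {T. q \<le> p \<and> (\<forall>j. p \<le> j \<longrightarrow> T 0 j = 0) \<and> (\<forall>j. q \<le> j \<longrightarrow> T 1 j = 0)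
     \<and> (\<forall>i j. 2 \<le> i \<longrightarrow> T i j = 0)
     \<and> (\<forall>j<p. 1 \<le> T 0 j \<and> T 0 j \<le> length cs) \<and> (\<forall>j<q. 1 \<le> T 1 j \<and> T 1 j \<le> length cs)
     \<and> (\<forall>j. Suc j < p \<longrightarrow> T 0 j \<le> T 0 (Suc j)) \<and> (\<forall>j. Suc j < q \<longrightarrow> T 1 j \<le> T 1 (Suc j))
     \<and> (\<forall>j<q. T 0 j < T 1 j) \<and> (\<forall>v<length cs. card {(i, j). T i j = Suc v} = cs ! v)}"

definition extT :: "nat \<Rightarrow> nat \<Rightarrow> nat \<Rightarrow> nat \<Rightarrow> nat \<Rightarrow> (nat \<Rightarrow> nat \<Rightarrow> nat) \<Rightarrow> nat \<Rightarrow> nat \<Rightarrow> nat" where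
  "extT K p' p q' q T i j = (if i = 0 \<and> p' \<le> j \<and> j < p then K else if i = 1 \<and> q' \<le> j \<and> j < q then K else T i j)"

definition restr :: "nat \<Rightarrow> (nat \<Rightarrow> nat \<Rightarrow> nat) \<Rightarrow> nat \<Rightarrow> nat \<Rightarrow> nat" where
  "restr K T i j = (if T i j = K then 0 else T i j)"

lemma mono_row:
  assumes "\<forall>j. Suc j < p \<longrightarrow> r j \<le> r (Suc j)" "j \<le> j'" "j' < p"
  shows "r j \<le> (r j' :: nat)"
  using assms(2,3)
proof (induction j')
  case 0 then show ?case by simp
next
  case (Suc j')
  show ?case
  proof (cases "j = Suc j'")
    case True then show ?thesis by simp
  next
    case False
    then have "j \<le> j'" using Suc.prems by simp
    then have "r j \<le> r j'" using Suc by simp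
    also have "r j' \<le> r (Suc j')" using assms(1) Suc.prems by simp
    finally show ?thesis .
  qed
qed

lemma block:
  assumes mono: "\<forall>j. Suc j < p \<longrightarrow> r j \<le> r (Suc j)" and bnd: "\<forall>j<p. r j \<le> (K::nat)"
  shows "{j. j<p \<and> r j = K} = {p - card {j. j<p \<and> r j = K}..<p}"
proof (cases "{j. j<p \<and> r j = K} = {}")
  case True
  then have e: "{j. j<p \<and> r j = K} = {}" .
  show ?thesis unfolding e by simp
next
  case False
  let ?S = "{j. j<p \<and> r j = K}"
  define j0 where "j0 = Min ?S"
  have fin: "finite ?S" by simp
  have j0S: "j0 \<in> ?S" unfolding j0_def using Min_in[OF fin False] .
  have S: "?S = {j0..<p}"
  proof
    show "?S \<subseteq> {j0..<p}" unfolding j0_def using fin by auto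
    show "{j0..<p} \<subseteq> ?S"
    proof
      fix j assume j: "j \<in> {j0..<p}"
      have "r j0 \<le> r j" using mono_row[OF mono, of j0 j] j by simp
      then show "j \<in> ?S" using j j0S bnd by (auto intro: antisym)
    qed
  qed
  show ?thesis using S j0S by simp
qed

lemma card_pairs:
  fixes T :: "nat \<Rightarrow> nat \<Rightarrow> nat"
  assumes "K \<noteq> 0" "\<forall>j. p \<le> j \<longrightarrow> T 0 j = 0" "\<forall>j. q \<le> j \<longrightarrow> T 1 j = 0" "\<forall>i j. 2 \<le> i \<longrightarrow> T i j = 0"
  shows "card {(i, j). T i j = K} = card {j. j<p \<and> T 0 j = K} + card {j. j<q \<and> T 1 j = K}"
proof -
  have e: "{(i, j). T i j = K} = Pair 0 ` {j. j<p \<and> T 0 j = K} \<union> Pair 1 ` {j. j<q \<and> T 1 j = K}"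
  proof (rule set_eqI)
    fix x :: "nat \<times> nat"
    obtain i j where x: "x = (i, j)" by (cases x)
    have "T i j = K \<longleftrightarrow> (i = 0 \<and> j < p \<and> T 0 j = K \<or> i = 1 \<and> j < q \<and> T 1 j = K)"
    proof (cases "i \<ge> 2")
      case True then show ?thesis using assms by auto
    next
      case False
      then have "i = 0 \<or> i = 1" by auto
      then show ?thesis using assms by (auto simp: not_less[symmetric])
    qed
    then show "x \<in> {(i, j). T i j = K} \<longleftrightarrow> x \<in> Pair 0 ` {j. j<p \<and> T 0 j = K} \<union> Pair 1 ` {j. j<q \<and> T 1 j = K}"
      unfolding x by auto
  qed
  show ?thesis unfolding e
    by (subst card_Un_disjoint) (auto simp: card_image inj_on_def)
qed

lemma genD:
  assumes "T \<in> gen cs p q"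
  shows "q \<le> p" "\<And>j. p \<le> j \<Longrightarrow> T 0 j = 0" "\<And>j. q \<le> j \<Longrightarrow> T 1 j = 0"
    "\<And>i j. 2 \<le> i \<Longrightarrow> T i j = 0"
    "\<And>j. j < p \<Longrightarrow> 1 \<le> T 0 j" "\<And>j. j < p \<Longrightarrow> T 0 j \<le> length cs"
    "\<And>j. j < q \<Longrightarrow> 1 \<le> T 1 j" "\<And>j. j < q \<Longrightarrow> T 1 j \<le> length cs"
    "\<forall>j. Suc j < p \<longrightarrow> T 0 j \<le> T 0 (Suc j)" "\<forall>j. Suc j < q \<longrightarrow> T 1 j \<le> T 1 (Suc j)"
    "\<And>j. j < q \<Longrightarrow> T 0 j < T 1 j" "\<And>v. v < length cs \<Longrightarrow> card {(i, j). T i j = Suc v} = cs ! v"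
  using assms unfolding gen_def by auto

lemma genI:
  assumes "q \<le> p" "\<And>j. p \<le> j \<Longrightarrow> T 0 j = 0" "\<And>j. q \<le> j \<Longrightarrow> T 1 j = 0"
    "\<And>i j. 2 \<le> i \<Longrightarrow> T i j = 0"
    "\<And>j. j < p \<Longrightarrow> 1 \<le> T 0 j" "\<And>j. j < p \<Longrightarrow> T 0 j \<le> length cs"
    "\<And>j. j < q \<Longrightarrow> 1 \<le> T 1 j" "\<And>j. j < q \<Longrightarrow> T 1 j \<le> length cs"
    "\<And>j. Suc j < p \<Longrightarrow> T 0 j \<le> T 0 (Suc j)" "\<And>j. Suc j < q \<Longrightarrow> T 1 j \<le> T 1 (Suc j)"
    "\<And>j. j < q \<Longrightarrow> T 0 j < T 1 j" "\<And>v. v < length cs \<Longrightarrow> card {(i, j). T i j = Suc v} = cs ! v"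
  shows "T \<in> gen cs p q"
  using assms unfolding gen_def by auto

lemma extT_in:
  assumes T: "T \<in> gen cs p' q'" and pp: "p' \<le> p" and qq: "q' \<le> q" and qp: "q \<le> p'"
    and c: "(p - p') + (q - q') = c"
  shows "extT (Suc (length cs)) p' p q' q T \<in> gen (cs @ [c]) p q"
proof -
  let ?K = "Suc (length cs)"
  let ?E = "extT ?K p' p q' q T"
  note D = genD[OF T]
  have q'p': "q' \<le> p'" by (rule D(1))
  have z0: "\<And>j. p \<le> j \<Longrightarrow> ?E 0 j = 0" using D(2) pp by (auto simp: extT_def)
  have z1: "\<And>j. q \<le> j \<Longrightarrow> ?E 1 j = 0" using D(3) qq by (auto simp: extT_def)
  have z2: "\<And>i j. 2 \<le> i \<Longrightarrow> ?E i j = 0" using D(4) by (auto simp: extT_def)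
  have cnt: "card {(i, j). ?E i j = Suc v} = (cs @ [c]) ! v" if v: "v < length (cs @ [c])" for v
  proof (cases "v < length cs")
    case True
    have "{(i, j). ?E i j = Suc v} = {(i, j). T i j = Suc v}"
      using D(2) D(3) True by (auto simp: extT_def)
    then show ?thesis using D(12)[OF True] True by (simp add: nth_append)
  next
    case False
    then have vv: "v = length cs" using v by simp
    have a: "{j. j < p \<and> ?E 0 j = ?K} = {p'..<p}"
    proof (rule set_eqI)
      fix j show "j \<in> {j. j < p \<and> ?E 0 j = ?K} \<longleftrightarrow> j \<in> {p'..<p}"
        using D(6)[of j] pp by (cases "j < p'") (auto simp: extT_def)
    qed
    have b: "{j. j < q \<and> ?E 1 j = ?K} = {q'..<q}"
    proof (rule set_eqI)
      fix j show "j \<in> {j. j < q \<and> ?E 1 j = ?K} \<longleftrightarrow> j \<in> {q'..<q}"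
        using D(8)[of j] qq by (cases "j < q'") (auto simp: extT_def)
    qed
    have "card {(i, j). ?E i j = ?K} = card {j. j < p \<and> ?E 0 j = ?K} + card {j. j < q \<and> ?E 1 j = ?K}"
      by (rule card_pairs) (use z0 z1 z2 in auto)
    then show ?thesis using vv a b c by (simp add: nth_append)
  qed
  show ?thesis
  proof (rule genI)
    show "q \<le> p" using qp pp by simp
  next
    fix j assume "j < p" then show "1 \<le> ?E 0 j" using D(5) by (auto simp: extT_def)
  next
    fix j assume "j < p" then show "?E 0 j \<le> length (cs @ [c])" using D(6)[of j] by (auto simp: extT_def)
  next
    fix j assume "j < q" then show "1 \<le> ?E 1 j" using D(7) by (auto simp: extT_def)
  next
    fix j assume "j < q" then show "?E 1 j \<le> length (cs @ [c])" using D(8)[of j] by (auto simp: extT_def)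
  next
    fix j assume j: "Suc j < p"
    show "?E 0 j \<le> ?E 0 (Suc j)"
    proof (cases "Suc j < p'")
      case True then show ?thesis using D(9) by (auto simp: extT_def)
    next
      case False
      then show ?thesis using D(6)[of j] D(6)[of "Suc j"] j by (auto simp: extT_def)
    qed
  next
    fix j assume j: "Suc j < q"
    show "?E 1 j \<le> ?E 1 (Suc j)"
    proof (cases "Suc j < q'")
      case True then show ?thesis using D(10) by (auto simp: extT_def)
    next
      case False
      then show ?thesis using D(8)[of j] D(8)[of "Suc j"] j by (auto simp: extT_def)
    qed
  next
    fix j assume j: "j < q"
    show "?E 0 j < ?E 1 j"
    proof (cases "j < q'")
      case True then show ?thesis using D(11) q'p' by (auto simp: extT_def)
    next
      case False
      then show ?thesis using D(6)[of j] j qp by (auto simp: extT_def)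
    qed
  qed (use z0 z1 z2 cnt in auto)
qed

lemma decomp:
  assumes T: "T \<in> gen (cs @ [c]) p q"
  obtains a where "a \<le> c" "c - a \<le> q" "q + a \<le> p"
    "restr (Suc (length cs)) T \<in> gen cs (p - a) (q - (c - a))"
    "T = extT (Suc (length cs)) (p - a) p (q - (c - a)) q (restr (Suc (length cs)) T)"
proof -
  let ?K = "Suc (length cs)"
  note D = genD[OF T]
  define a where "a = card {j. j < p \<and> T 0 j = ?K}"
  define b where "b = card {j. j < q \<and> T 1 j = ?K}"
  have S0: "{j. j < p \<and> T 0 j = ?K} = {p - a..<p}"
    unfolding a_def by (rule block) (use D(9) D(6) in auto)
  have S1: "{j. j < q \<and> T 1 j = ?K} = {q - b..<q}"
    unfolding b_def by (rule block) (use D(10) D(8) in auto)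
  have ap: "a \<le> p" unfolding a_def by (rule order_trans[OF card_mono[of "{..<p}"]]) auto
  have bq: "b \<le> q" unfolding b_def by (rule order_trans[OF card_mono[of "{..<q}"]]) auto
  have "card {(i, j). T i j = ?K} = a + b"
    unfolding a_def b_def by (rule card_pairs) (use D(2) D(3) D(4) in auto)
  moreover have "card {(i, j). T i j = Suc (length cs)} = c"
    using D(12)[of "length cs"] by (simp add: nth_append)
  ultimately have cab: "c = a + b" by simp
  have in0: "T 0 j = ?K \<longleftrightarrow> p - a \<le> j \<and> j < p" for j
  proof -
    have "T 0 j = ?K \<longleftrightarrow> j < p \<and> T 0 j = ?K" using D(2)[of j] by (cases "p \<le> j") auto
    also have "\<dots> \<longleftrightarrow> j \<in> {p - a..<p}" using S0 by blast
    finally show ?thesis by simp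
  qed
  have in1: "T 1 j = ?K \<longleftrightarrow> q - b \<le> j \<and> j < q" for j
  proof -
    have "T 1 j = ?K \<longleftrightarrow> j < q \<and> T 1 j = ?K" using D(3)[of j] by (cases "q \<le> j") auto
    also have "\<dots> \<longleftrightarrow> j \<in> {q - b..<q}" using S1 by blast
    finally show ?thesis by simp
  qed
  have qa: "q + a \<le> p"
  proof (rule ccontr)
    assume "\<not> q + a \<le> p"
    then have j: "p - a < q" "a > 0" using D(1) ap by auto
    then have "T 0 (p - a) = ?K" using in0 ap by simp
    moreover have "T 0 (p - a) < T 1 (p - a)" using D(11) j by simp
    moreover have "T 1 (p - a) \<le> ?K" using D(8) j by simp
    ultimately show False by simp
  qed
  let ?R = "restr ?K T"
  have R: "?R \<in> gen cs (p - a) (q - b)"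
  proof (rule genI)
    show "q - b \<le> p - a" using qa by simp
  next
    fix j assume "p - a \<le> j" then show "?R 0 j = 0" using in0[of j] D(2)[of j] by (auto simp: restr_def)
  next
    fix j assume "q - b \<le> j" then show "?R 1 j = 0" using in1[of j] D(3)[of j] by (auto simp: restr_def)
  next
    fix i j :: nat assume "2 \<le> i" then show "?R i j = 0" using D(4) by (auto simp: restr_def)
  next
    fix j assume "j < p - a" then show "1 \<le> ?R 0 j" using in0[of j] D(5)[of j] by (auto simp: restr_def)
  next
    fix j assume "j < p - a" then show "?R 0 j \<le> length cs" using in0[of j] D(6)[of j] by (auto simp: restr_def le_Suc_eq)
  next
    fix j assume "j < q - b" then show "1 \<le> ?R 1 j" using in1[of j] D(7)[of j] by (auto simp: restr_def)
  next
    fix j assume "j < q - b" then show "?R 1 j \<le> length cs" using in1[of j] D(8)[of j] by (auto simp: restr_def le_Suc_eq)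
  next
    fix j assume "Suc j < p - a" then show "?R 0 j \<le> ?R 0 (Suc j)"
      using in0[of j] in0[of "Suc j"] D(9) by (auto simp: restr_def)
  next
    fix j assume "Suc j < q - b" then show "?R 1 j \<le> ?R 1 (Suc j)"
      using in1[of j] in1[of "Suc j"] D(10) by (auto simp: restr_def)
  next
    fix j assume "j < q - b" then show "?R 0 j < ?R 1 j"
      using in0[of j] in1[of j] D(11)[of j] qa by (auto simp: restr_def)
  next
    fix v assume v: "v < length cs"
    have "{(i, j). ?R i j = Suc v} = {(i, j). T i j = Suc v}" using v by (auto simp: restr_def)
    then show "card {(i, j). ?R i j = Suc v} = cs ! v" using D(12)[of v] v by (simp add: nth_append)
  qed
  have E: "T = extT ?K (p - a) p (q - b) q ?R"
  proof (intro HOL.ext)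
    fix i j
    show "T i j = extT ?K (p - a) p (q - b) q ?R i j"
    proof (cases "i \<ge> 2")
      case True then show ?thesis using D(4)[of i j] by (auto simp: extT_def restr_def)
    next
      case False
      then have "i = 0 \<or> i = 1" by auto
      then show ?thesis using in0[of j] in1[of j] by (auto simp: extT_def restr_def)
    qed
  qed
  show ?thesis
    by (rule that[of a]) (use cab bq qa R E in auto)
qed

lemma zone0:
  assumes T: "T \<in> gen cs p' q'" and pp: "p' \<le> p"
  shows "{j. j < p \<and> extT (Suc (length cs)) p' p q' q T 0 j = Suc (length cs)} = {p'..<p}"
proof (rule set_eqI)
  note D = genD[OF T]
  fix j show "j \<in> {j. j < p \<and> extT (Suc (length cs)) p' p q' q T 0 j = Suc (length cs)} \<longleftrightarrow> j \<in> {p'..<p}"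
    using D(6)[of j] pp by (cases "j < p'") (auto simp: extT_def)
qed

lemma restr_ext:
  assumes T: "T \<in> gen cs p' q'"
  shows "restr (Suc (length cs)) (extT (Suc (length cs)) p' p q' q T) = T"
proof (intro HOL.ext)
  note D = genD[OF T]
  fix i j
  have nK: "T i j \<noteq> Suc (length cs)"
  proof (cases "i \<ge> 2")
    case True then show ?thesis using D(4) by simp
  next
    case False
    then have "i = 0 \<or> i = 1" by auto
    then show ?thesis using D(2)[of j] D(3)[of j] D(6)[of j] D(8)[of j]
      by (cases "j < p'"; cases "j < q'") auto
  qed
  show "restr (Suc (length cs)) (extT (Suc (length cs)) p' p q' q T) i j = T i j"
    using nK D(2)[of j] D(3)[of j] by (auto simp: restr_def extT_def)
qed

lemma gen_snoc:
  "gen (cs @ [c]) p q = (\<lambda>(a, T). extT (Suc (length cs)) (p - a) p (q - (c - a)) q T) `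
     (SIGMA a:{a. a \<le> c \<and> c - a \<le> q \<and> q + a \<le> p}. gen cs (p - a) (q - (c - a)))"
proof (rule equalityI)
  show "gen (cs @ [c]) p q \<subseteq> (\<lambda>(a, T). extT (Suc (length cs)) (p - a) p (q - (c - a)) q T) `
     (SIGMA a:{a. a \<le> c \<and> c - a \<le> q \<and> q + a \<le> p}. gen cs (p - a) (q - (c - a)))"
  proof
    fix T assume T: "T \<in> gen (cs @ [c]) p q"
    obtain a where a: "a \<le> c" "c - a \<le> q" "q + a \<le> p"
      "restr (Suc (length cs)) T \<in> gen cs (p - a) (q - (c - a))"
      "T = extT (Suc (length cs)) (p - a) p (q - (c - a)) q (restr (Suc (length cs)) T)"
      by (rule decomp[OF T])
    show "T \<in> (\<lambda>(a, T). extT (Suc (length cs)) (p - a) p (q - (c - a)) q T) `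
     (SIGMA a:{a. a \<le> c \<and> c - a \<le> q \<and> q + a \<le> p}. gen cs (p - a) (q - (c - a)))"
    proof (rule image_eqI[of _ _ "(a, restr (Suc (length cs)) T)"])
      show "T = (\<lambda>(a, T). extT (Suc (length cs)) (p - a) p (q - (c - a)) q T) (a, restr (Suc (length cs)) T)"
        unfolding case_prod_conv by (rule a(5))
      show "(a, restr (Suc (length cs)) T) \<in> (SIGMA a:{a. a \<le> c \<and> c - a \<le> q \<and> q + a \<le> p}. gen cs (p - a) (q - (c - a)))"
        using a(1-4) by (simp only: mem_Sigma_iff mem_Collect_eq)
    qed
  qed
next
  show "(\<lambda>(a, T). extT (Suc (length cs)) (p - a) p (q - (c - a)) q T) `
     (SIGMA a:{a. a \<le> c \<and> c - a \<le> q \<and> q + a \<le> p}. gen cs (p - a) (q - (c - a))) \<subseteq> gen (cs @ [c]) p q"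
  proof (rule subsetI)
    fix x assume "x \<in> (\<lambda>(a, T). extT (Suc (length cs)) (p - a) p (q - (c - a)) q T) `
     (SIGMA a:{a. a \<le> c \<and> c - a \<le> q \<and> q + a \<le> p}. gen cs (p - a) (q - (c - a)))"
    then obtain y where y: "y \<in> (SIGMA a:{a. a \<le> c \<and> c - a \<le> q \<and> q + a \<le> p}. gen cs (p - a) (q - (c - a)))"
      and xy: "x = (\<lambda>(a, T). extT (Suc (length cs)) (p - a) p (q - (c - a)) q T) y" by (rule imageE)
    obtain a T where yy: "y = (a, T)" by (cases y)
    have a: "a \<le> c" "c - a \<le> q" "q + a \<le> p" and T: "T \<in> gen cs (p - a) (q - (c - a))"
      using y unfolding yy by auto
    have x: "x = extT (Suc (length cs)) (p - a) p (q - (c - a)) q T" using xy unfolding yy by simp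
    show "x \<in> gen (cs @ [c]) p q"
      unfolding x by (rule extT_in[OF T]) (use a in auto)
  qed
qed

lemma gen_snoc_inj:
  "inj_on (\<lambda>(a, T). extT (Suc (length cs)) (p - a) p (q - (c - a)) q T)
     (SIGMA a:{a. a \<le> c \<and> c - a \<le> q \<and> q + a \<le> p}. gen cs (p - a) (q - (c - a)))"
proof (rule inj_onI)
  fix x y
  assume x: "x \<in> (SIGMA a:{a. a \<le> c \<and> c - a \<le> q \<and> q + a \<le> p}. gen cs (p - a) (q - (c - a)))"
    and y: "y \<in> (SIGMA a:{a. a \<le> c \<and> c - a \<le> q \<and> q + a \<le> p}. gen cs (p - a) (q - (c - a)))"
    and e0: "(\<lambda>(a, T). extT (Suc (length cs)) (p - a) p (q - (c - a)) q T) x = (\<lambda>(a, T). extT (Suc (length cs)) (p - a) p (q - (c - a)) q T) y"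
  obtain a1 T1 where x1: "x = (a1, T1)" by (cases x)
  obtain a2 T2 where y1: "y = (a2, T2)" by (cases y)
  have a1: "a1 \<le> c" "c - a1 \<le> q" "q + a1 \<le> p" and T1: "T1 \<in> gen cs (p - a1) (q - (c - a1))"
    using x unfolding x1 by auto
  have a2: "a2 \<le> c" "c - a2 \<le> q" "q + a2 \<le> p" and T2: "T2 \<in> gen cs (p - a2) (q - (c - a2))"
    using y unfolding y1 by auto
  have e: "extT (Suc (length cs)) (p - a1) p (q - (c - a1)) q T1 = extT (Suc (length cs)) (p - a2) p (q - (c - a2)) q T2"
    using e0 unfolding x1 y1 by simp
  let ?K = "Suc (length cs)"
  have z1: "{j. j < p \<and> extT ?K (p - a1) p (q - (c - a1)) q T1 0 j = ?K} = {p - a1..<p}"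
    by (rule zone0[OF T1]) simp
  have z2: "{j. j < p \<and> extT ?K (p - a2) p (q - (c - a2)) q T2 0 j = ?K} = {p - a2..<p}"
    by (rule zone0[OF T2]) simp
  have "{p - a1..<p} = {p - a2..<p}"
    using z1 z2 by (simp only: e)
  then have "card {p - a1..<p} = card {p - a2..<p}" by simp
  then have aa: "a1 = a2" using a1 a2 by simp
  have "T1 = restr ?K (extT ?K (p - a1) p (q - (c - a1)) q T1)" using restr_ext[OF T1] by simp
  also have "\<dots> = restr ?K (extT ?K (p - a2) p (q - (c - a2)) q T2)" by (simp only: e)
  also have "\<dots> = T2" using restr_ext[OF T2] by simp
  finally have "T1 = T2" .
  then show "x = y" using aa x1 y1 by simp
qed

lemma gen_Nil: "gen [] p q \<subseteq> {\<lambda>i j. 0}"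
proof
  fix T assume T: "T \<in> gen [] p q"
  note D = genD[OF T]
  have "T i j = 0" for i j
  proof (cases "i \<ge> 2")
    case True then show ?thesis using D(4) by simp
  next
    case False
    then have "i = 0 \<or> i = 1" by auto
    then show ?thesis using D(2)[of j] D(3)[of j] D(5)[of j] D(6)[of j] D(7)[of j] D(8)[of j]
      by (cases "j < p"; cases "j < q") auto
  qed
  then have "T = (\<lambda>i j. 0)" by (intro HOL.ext)
  then show "T \<in> {\<lambda>i j. 0}" by simp
qed

lemma gen_finite: "finite (gen cs p q)"
proof (induction cs arbitrary: p q rule: rev_induct)
  case Nil then show ?case using finite_subset[OF gen_Nil] by simp
next
  case (snoc c cs)
  show ?case unfolding gen_snoc
    by (rule finite_imageI, rule finite_SigmaI) (use snoc in auto)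
qed

lemma card_gen_snoc:
  "card (gen (cs @ [c]) p q) = (\<Sum>a\<le>c. if c - a \<le> q \<and> q + a \<le> p then card (gen cs (p - a) (q - (c - a))) else 0)"
proof -
  have "card (gen (cs @ [c]) p q) = card (SIGMA a:{a. a \<le> c \<and> c - a \<le> q \<and> q + a \<le> p}. gen cs (p - a) (q - (c - a)))"
    unfolding gen_snoc by (rule card_image[OF gen_snoc_inj])
  also have "\<dots> = (\<Sum>a\<in>{a. a \<le> c \<and> c - a \<le> q \<and> q + a \<le> p}. card (gen cs (p - a) (q - (c - a))))"
    using gen_finite by (intro card_SigmaI) simp_all
  also have "\<dots> = (\<Sum>a\<le>c. if c - a \<le> q \<and> q + a \<le> p then card (gen cs (p - a) (q - (c - a))) else 0)"
  proof -
    have "{a. a \<le> c \<and> c - a \<le> q \<and> q + a \<le> p} = {a \<in> {..c}. c - a \<le> q \<and> q + a \<le> p}" by auto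
    then show ?thesis by (simp only: sum.inter_filter[OF finite_atMost])
  qed
  finally show ?thesis .
qed

lemma card_gen_Nil: "card (gen [] p q) = (if p = 0 \<and> q = 0 then 1 else 0)"
proof (cases "p = 0 \<and> q = 0")
  case True
  have "(\<lambda>i j. 0) \<in> gen [] p q" using True unfolding gen_def by simp
  then have "gen [] p q = {\<lambda>i j. 0}" using gen_Nil by blast
  then show ?thesis using True by simp
next
  case False
  have "gen [] p q = {}"
  proof (rule ccontr)
    assume "gen [] p q \<noteq> {}"
    then obtain T where T: "T \<in> gen [] p q" by blast
    note D = genD[OF T]
    show False using False D(1) D(5)[of 0] D(6)[of 0] by auto
  qed
  then show ?thesis using False by simp
qed





lemma sum3: "(\<Sum>a\<le>(2::nat). g a) = g 0 + g 1 + (g 2 :: nat)"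
  by (simp add: numeral_2_eq_2)

lemma rep_snoc: "replicate (Suc m) x = replicate m x @ [x]"
  by (simp add: replicate_append_same)

lemma card_rep:
  "int (card (gen (replicate m 2) p q)) =
     (if p + q = 2 * m \<and> q \<le> p then t m (int ((p - q) div 2)) - t m (int ((p - q) div 2) + 1) else 0)"
proof (induction m arbitrary: p q)
  case 0
  then show ?case by (simp add: card_gen_Nil)
next
  case (Suc m)
  let ?G = "\<lambda>p q. card (gen (replicate m 2) p q)"
  have S: "card (gen (replicate (Suc m) 2) p q) =
      (if 2 \<le> q \<and> q \<le> p then ?G p (q - 2) else 0)
    + (if 1 \<le> q \<and> q + 1 \<le> p then ?G (p - 1) (q - 1) else 0)
    + (if q + 2 \<le> p then ?G (p - 2) q else 0)"
    unfolding rep_snoc card_gen_snoc sum3 by simp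
  show ?case
  proof (cases "p + q = 2 * Suc m \<and> q \<le> p")
    case False
    have "?G p (q - 2) = 0" if h: "2 \<le> q \<and> q \<le> p"
    proof -
      have "\<not> (p + (q - 2) = 2 * m \<and> q - 2 \<le> p)" using h False by arith
      then show ?thesis using Suc.IH[of p "q - 2"] by (simp only: if_False of_nat_eq_0_iff)
    qed
    moreover have "?G (p - 1) (q - 1) = 0" if h: "1 \<le> q \<and> q + 1 \<le> p"
    proof -
      have "\<not> (p - 1 + (q - 1) = 2 * m \<and> q - 1 \<le> p - 1)" using h False by arith
      then show ?thesis using Suc.IH[of "p - 1" "q - 1"] by (simp only: if_False of_nat_eq_0_iff)
    qed
    moreover have "?G (p - 2) q = 0" if h: "q + 2 \<le> p"
    proof -
      have "\<not> (p - 2 + q = 2 * m \<and> q \<le> p - 2)" using h False by arith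
      then show ?thesis using Suc.IH[of "p - 2" q] by (simp only: if_False of_nat_eq_0_iff)
    qed
    ultimately show ?thesis using S False by auto
  next
    case True
    then obtain h where pq: "p = q + 2 * h" by (metis le_add_diff_inverse dvd_def even_diff_nat
        even_add even_mult_iff odd_numeral odd_one)
    have hm: "q + h = Suc m" using True pq by simp
    have d: "(p - q) div 2 = h" using pq by simp
    define F where "F k = t m k - t m (k + 1)" for k
    have T0: "int (if 2 \<le> q \<and> q \<le> p then ?G p (q - 2) else 0) = F (int h + 1)"
    proof (cases "2 \<le> q")
      case True
      have c: "p + (q - 2) = 2 * m \<and> q - 2 \<le> p" using True pq hm by arith
      have dv: "int ((p - (q - 2)) div 2) = int h + 1" using pq True by simp
      have "int (?G p (q - 2)) = t m (int ((p - (q - 2)) div 2)) - t m (int ((p - (q - 2)) div 2) + 1)"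
        using Suc.IH[of p "q - 2"] c by (simp only: simp_thms if_True)
      then have "int (?G p (q - 2)) = F (int h + 1)" unfolding dv F_def .
      then show ?thesis using True pq by simp
    next
      case False
      then have "t m (int h + 1) = 0" "t m (int h + 1 + 1) = 0" using hm by (auto intro: t_zero)
      then show ?thesis using False by (simp add: F_def)
    qed
    have T1: "int (if 1 \<le> q \<and> q + 1 \<le> p then ?G (p - 1) (q - 1) else 0) = (if h \<ge> 1 then F (int h) else 0)"
    proof (cases "1 \<le> q \<and> h \<ge> 1")
      case True
      have c: "p - 1 + (q - 1) = 2 * m \<and> q - 1 \<le> p - 1" using True pq hm by arith
      have dv: "int ((p - 1 - (q - 1)) div 2) = int h" using pq True by simp
      have "int (?G (p - 1) (q - 1)) = t m (int ((p - 1 - (q - 1)) div 2)) - t m (int ((p - 1 - (q - 1)) div 2) + 1)"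
        using Suc.IH[of "p - 1" "q - 1"] c by (simp only: simp_thms if_True)
      then have "int (?G (p - 1) (q - 1)) = F (int h)" unfolding dv F_def .
      then show ?thesis using True pq by simp
    next
      case False
      show ?thesis
      proof (cases "h \<ge> 1")
        case True
        then have "q = 0" using False by simp
        then have "t m (int h) = 0" "t m (int h + 1) = 0" using hm by (auto intro: t_zero)
        then show ?thesis using \<open>q = 0\<close> True by (simp add: F_def)
      next
        case False
        then show ?thesis using pq by simp
      qed
    qed
    have T2: "int (if q + 2 \<le> p then ?G (p - 2) q else 0) = (if h \<ge> 1 then F (int h - 1) else 0)"
    proof (cases "h \<ge> 1")
      case True
      have c: "p - 2 + q = 2 * m \<and> q \<le> p - 2" using True pq hm by arith
      have dv: "int ((p - 2 - q) div 2) = int h - 1" using pq True by simp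
      have "int (?G (p - 2) q) = t m (int ((p - 2 - q) div 2)) - t m (int ((p - 2 - q) div 2) + 1)"
        using Suc.IH[of "p - 2" q] c by (simp only: simp_thms if_True)
      then have "int (?G (p - 2) q) = F (int h - 1)" unfolding dv F_def by simp
      then show ?thesis using True pq by simp
    next
      case False
      then show ?thesis using pq by simp
    qed
    have goal: "t (Suc m) (int h) - t (Suc m) (int h + 1) =
        F (int h + 1) + (if h \<ge> 1 then F (int h) else 0) + (if h \<ge> 1 then F (int h - 1) else 0)"
    proof (cases "h \<ge> 1")
      case True then show ?thesis by (simp add: F_def algebra_simps)
    next
      case False
      then have "h = 0" by simp
      then show ?thesis using t_sym[of m 1] by (simp add: F_def)
    qed
    show ?thesis using S T0 T1 T2 goal True d by simp
  qed
qed




lemma all2: "(\<forall>i<(2::nat). P i) \<longleftrightarrow> P 0 \<and> P 1"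
  by (auto simp: less_2_cases_iff)

lemma bridge_gen:
  fixes L k :: nat
  assumes k: "k = length cs"
  shows "{T. (\<forall>i j. \<not> (i < 2 \<and> j < L) \<longrightarrow> T i j = 0)
       \<and> (\<forall>i<2. \<forall>j<L. 1 \<le> T i j \<and> T i j \<le> k)
       \<and> (\<forall>i<2. \<forall>j. Suc j < L \<longrightarrow> T i j \<le> T i (Suc j))
       \<and> (\<forall>j<L. T 0 j < T 1 j)
       \<and> (\<forall>v<k. card {(i, j). i < 2 \<and> j < L \<and> T i j = Suc v} = cs ! v)} = gen cs L L"
  unfolding gen_def
proof (rule Collect_cong)
  fix T :: "nat \<Rightarrow> nat \<Rightarrow> nat"
  have zi: "(\<forall>i j. \<not> (i < 2 \<and> j < L) \<longrightarrow> T i j = 0) \<longleftrightarrow>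
      ((\<forall>j. L \<le> j \<longrightarrow> T 0 j = 0) \<and> (\<forall>j. L \<le> j \<longrightarrow> T 1 j = 0) \<and> (\<forall>i j. 2 \<le> i \<longrightarrow> T i j = 0))"
  proof
    assume "\<forall>i j. \<not> (i < 2 \<and> j < L) \<longrightarrow> T i j = 0"
    then show "(\<forall>j. L \<le> j \<longrightarrow> T 0 j = 0) \<and> (\<forall>j. L \<le> j \<longrightarrow> T 1 j = 0) \<and> (\<forall>i j. 2 \<le> i \<longrightarrow> T i j = 0)"
      by auto
  next
    assume h: "(\<forall>j. L \<le> j \<longrightarrow> T 0 j = 0) \<and> (\<forall>j. L \<le> j \<longrightarrow> T 1 j = 0) \<and> (\<forall>i j. 2 \<le> i \<longrightarrow> T i j = 0)"
    show "\<forall>i j. \<not> (i < 2 \<and> j < L) \<longrightarrow> T i j = 0"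
    proof (intro allI impI)
      fix i j :: nat assume "\<not> (i < 2 \<and> j < L)"
      then have "2 \<le> i \<or> (i = 0 \<and> L \<le> j) \<or> (i = 1 \<and> L \<le> j)" by auto
      then show "T i j = 0" using h by auto
    qed
  qed
  have ce: "{(i, j). i < 2 \<and> j < L \<and> T i j = Suc v} = {(i, j). T i j = Suc v}"
    if z: "\<forall>i j. \<not> (i < 2 \<and> j < L) \<longrightarrow> T i j = 0" for v
  proof (rule set_eqI)
    fix x :: "nat \<times> nat"
    obtain a b where x: "x = (a, b)" by (cases x)
    show "x \<in> {(i, j). i < 2 \<and> j < L \<and> T i j = Suc v} \<longleftrightarrow> x \<in> {(i, j). T i j = Suc v}"
      unfolding x using z[rule_format, of a b] by (cases "a < 2 \<and> b < L") auto
  qed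
  show "((\<forall>i j. \<not> (i < 2 \<and> j < L) \<longrightarrow> T i j = 0)
       \<and> (\<forall>i<2. \<forall>j<L. 1 \<le> T i j \<and> T i j \<le> k)
       \<and> (\<forall>i<2. \<forall>j. Suc j < L \<longrightarrow> T i j \<le> T i (Suc j))
       \<and> (\<forall>j<L. T 0 j < T 1 j)
       \<and> (\<forall>v<k. card {(i, j). i < 2 \<and> j < L \<and> T i j = Suc v} = cs ! v)) \<longleftrightarrow>
     (L \<le> L \<and> (\<forall>j. L \<le> j \<longrightarrow> T 0 j = 0) \<and> (\<forall>j. L \<le> j \<longrightarrow> T 1 j = 0)
     \<and> (\<forall>i j. 2 \<le> i \<longrightarrow> T i j = 0)
     \<and> (\<forall>j<L. 1 \<le> T 0 j \<and> T 0 j \<le> length cs) \<and> (\<forall>j<L. 1 \<le> T 1 j \<and> T 1 j \<le> length cs)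
     \<and> (\<forall>j. Suc j < L \<longrightarrow> T 0 j \<le> T 0 (Suc j)) \<and> (\<forall>j. Suc j < L \<longrightarrow> T 1 j \<le> T 1 (Suc j))
     \<and> (\<forall>j<L. T 0 j < T 1 j) \<and> (\<forall>v<length cs. card {(i, j). T i j = Suc v} = cs ! v))"
  proof (cases "\<forall>i j. \<not> (i < 2 \<and> j < L) \<longrightarrow> T i j = 0")
    case True
    then show ?thesis using zi ce[OF True] k by (simp only: all2) auto
  next
    case False
    then show ?thesis using zi by auto
  qed
qed

lemma Kostka_gen: "Kostka2 cs = card (gen cs ((sum_list cs + 2) div 2 - 1) ((sum_list cs + 2) div 2 - 1))"
  unfolding Kostka2_def two_row_tableaux_def Let_def
  by (subst bridge_gen) simp_all




lemma K4: assumes "m \<ge> 1" shows "int (Kostka2 (replicate m 2 @ [4])) = t m 2 - t m 3"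
proof -
  have L: "(sum_list (replicate m 2 @ [4]) + 2) div 2 - 1 = m + 2" by (simp add: sum_list_replicate)
  have s: "Kostka2 (replicate m 2 @ [4]) = (if 4 \<le> m + 2 then card (gen (replicate m 2) (m + 2) (m + 2 - 4)) else 0)"
    unfolding Kostka_gen L card_gen_snoc by (simp add: numeral_eq_Suc atMost_Suc)
  show ?thesis
  proof (cases "m \<ge> 2")
    case True
    have d: "int ((m + 2 - (m + 2 - 4)) div 2) = 2" using True by simp
    have c: "m + 2 + (m + 2 - 4) = 2 * m \<and> m + 2 - 4 \<le> m + 2" using True by arith
    have "int (card (gen (replicate m 2) (m + 2) (m + 2 - 4))) = t m (int ((m + 2 - (m + 2 - 4)) div 2)) - t m (int ((m + 2 - (m + 2 - 4)) div 2) + 1)"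
      using card_rep[of m "m + 2" "m + 2 - 4"] c by (simp only: simp_thms if_True)
    then have "int (card (gen (replicate m 2) (m + 2) (m + 2 - 4))) = t m 2 - t m 3" unfolding d by simp
    then show ?thesis using s True by simp
  next
    case False
    then have "m = 1" using assms by simp
    have z: "t m 2 = 0" "t m 3 = 0" using \<open>m = 1\<close> by (auto intro: t_zero)
    have "Kostka2 (replicate m 2 @ [4]) = 0" using s \<open>m = 1\<close> by simp
    then show ?thesis using z by simp
  qed
qed

lemma K11: assumes m1: "m \<ge> 1" shows "int (Kostka2 (replicate m 2 @ [1, 1])) = t m 0 - t m 2"
proof -
  have e: "replicate m 2 @ [1, 1] = (replicate m 2 @ [1]) @ [1]" by simp
  have L: "(sum_list (replicate m 2 @ [1, 1]) + 2) div 2 - 1 = m + 1" by (simp add: sum_list_replicate)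
  have s: "Kostka2 (replicate m 2 @ [1, 1]) = card (gen (replicate m 2) (m + 1) (m - 1)) + card (gen (replicate m 2) m m)"
    unfolding Kostka_gen L unfolding e card_gen_snoc using m1 by (simp add: numeral_eq_Suc atMost_Suc)
  have c1: "m + 1 + (m - 1) = 2 * m \<and> m - 1 \<le> m + 1" using m1 by arith
  have d1: "int ((m + 1 - (m - 1)) div 2) = 1" using m1 by simp
  have "int (card (gen (replicate m 2) (m + 1) (m - 1))) = t m (int ((m + 1 - (m - 1)) div 2)) - t m (int ((m + 1 - (m - 1)) div 2) + 1)"
    using card_rep[of m "m + 1" "m - 1"] c1 by (simp only: simp_thms if_True)
  then have a: "int (card (gen (replicate m 2) (m + 1) (m - 1))) = t m 1 - t m 2" unfolding d1 by simp
  have b: "int (card (gen (replicate m 2) m m)) = t m 0 - t m 1"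
    using card_rep[of m m m] by simp
  show ?thesis using s a b by simp
qed




lemma t0_pos: "t m 0 \<ge> 1"
proof (induction m)
  case 0 then show ?case by simp
next
  case (Suc m)
  have "t (Suc m) 0 = t m 0 + 2 * t m 1" using t_sym[of m 1] by simp
  then show ?case using Suc t_nonneg[of m 1] by simp
qed

lemma rel:
  "(int m + 2) * (int m + 3) * (2 * t m 2 - t m 3 - t m 0) =
     (int m * int m + 3 * int m - 6) * t m 0 - (int m * int m + 3 * int m + 6) * t m 1"
proof -
  let ?M = "int m"
  have a: "(?M + 2) * t m 2 = ?M * t m 0 - t m 1" by (rule t2)
  have b: "(?M + 3) * t m 3 = (?M - 1) * t m 1 - 2 * t m 2" by (rule t3)
  have "(?M + 2) * (?M + 3) * (2 * t m 2 - t m 3 - t m 0) =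
      2 * (?M + 3) * ((?M + 2) * t m 2) - (?M + 2) * ((?M + 3) * t m 3) - (?M + 2) * (?M + 3) * t m 0"
    by (simp add: algebra_simps)
  also have "\<dots> = 2 * (?M + 3) * (?M * t m 0 - t m 1) - (?M + 2) * ((?M - 1) * t m 1 - 2 * t m 2) - (?M + 2) * (?M + 3) * t m 0"
    unfolding a b ..
  also have "\<dots> = 2 * (?M + 3) * (?M * t m 0 - t m 1) - (?M + 2) * (?M - 1) * t m 1 + 2 * ((?M + 2) * t m 2) - (?M + 2) * (?M + 3) * t m 0"
    by (simp add: algebra_simps)
  also have "\<dots> = 2 * (?M + 3) * (?M * t m 0 - t m 1) - (?M + 2) * (?M - 1) * t m 1 + 2 * (?M * t m 0 - t m 1) - (?M + 2) * (?M + 3) * t m 0"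
    unfolding a ..
  also have "\<dots> = (?M * ?M + 3 * ?M - 6) * t m 0 - (?M * ?M + 3 * ?M + 6) * t m 1"
    by (simp add: algebra_simps)
  finally show ?thesis .
qed

lemma up_step:
  fixes M x y :: int
  assumes M: "M \<ge> 33" and x: "x \<ge> 0" and h: "5 * M * y \<ge> (5 * M - 4) * x"
  shows "10 * (M + 1) * ((2 * M + 2) * x + (M + 1) * y) \<le> (10 * M + 3) * (M + 2) * (x + 2 * y)"
proof -
  have MM: "M * M \<ge> 33 * 33" using M by (metis mult_mono order_trans zero_le_numeral zero_le_mult_iff le_cases)
  have c1: "10 * M * M + 26 * M + 2 \<ge> 0" using M MM by linarith
  have h1: "(10 * M * M + 26 * M + 2) * ((5 * M - 4) * x) \<le> (10 * M * M + 26 * M + 2) * (5 * M * y)"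
    using mult_left_mono[OF h c1] .
  have c2: "5 * M * M - 164 * M - 8 \<ge> 0"
  proof -
    have "M * (5 * M - 164) \<ge> 33 * 1" using M by (intro mult_mono) auto
    then show ?thesis by (simp add: algebra_simps)
  qed
  have h2: "(5 * M * M - 164 * M - 8) * x \<ge> 0" using c2 x by simp
  have key: "5 * M * ((10 * M + 3) * (M + 2) * (x + 2 * y) - 10 * (M + 1) * ((2 * M + 2) * x + (M + 1) * y))
     = (10 * M * M + 26 * M + 2) * (5 * M * y) - (10 * M * M + 26 * M + 2) * ((5 * M - 4) * x) + (5 * M * M - 164 * M - 8) * x"
    by (simp add: algebra_simps)
  have "5 * M * ((10 * M + 3) * (M + 2) * (x + 2 * y) - 10 * (M + 1) * ((2 * M + 2) * x + (M + 1) * y)) \<ge> 0"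
    unfolding key using h1 h2 by linarith
  moreover have "5 * M > 0" using M by simp
  ultimately have "(10 * M + 3) * (M + 2) * (x + 2 * y) - 10 * (M + 1) * ((2 * M + 2) * x + (M + 1) * y) \<ge> 0"
    by (simp add: zero_le_mult_iff)
  then show ?thesis by simp
qed

lemma low_step:
  fixes M x y :: int
  assumes M: "M \<ge> 33" and x: "x \<ge> 0" and h: "10 * M * y \<le> (10 * M - 7) * x"
  shows "5 * (M + 1) * ((2 * M + 2) * x + (M + 1) * y) \<ge> (5 * M + 1) * (M + 2) * (x + 2 * y)"
proof -
  have MM: "M * M \<ge> 0" by simp
  have c1: "5 * M * M + 12 * M - 1 \<ge> 0" using M MM by linarith
  have h1: "(5 * M * M + 12 * M - 1) * (10 * M * y) \<le> (5 * M * M + 12 * M - 1) * ((10 * M - 7) * x)"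
    using mult_left_mono[OF h c1] .
  have c2: "5 * M * M + 174 * M - 7 \<ge> 0" using M MM by linarith
  have h2: "(5 * M * M + 174 * M - 7) * x \<ge> 0" using c2 x by simp
  have key: "10 * M * (5 * (M + 1) * ((2 * M + 2) * x + (M + 1) * y) - (5 * M + 1) * (M + 2) * (x + 2 * y))
     = (5 * M * M + 12 * M - 1) * ((10 * M - 7) * x) - (5 * M * M + 12 * M - 1) * (10 * M * y) + (5 * M * M + 174 * M - 7) * x"
    by (simp add: algebra_simps)
  have "10 * M * (5 * (M + 1) * ((2 * M + 2) * x + (M + 1) * y) - (5 * M + 1) * (M + 2) * (x + 2 * y)) \<ge> 0"
    unfolding key using h1 h2 by linarith
  moreover have "10 * M > 0" using M by simp
  ultimately have "5 * (M + 1) * ((2 * M + 2) * x + (M + 1) * y) - (5 * M + 1) * (M + 2) * (x + 2 * y) \<ge> 0"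
    by (simp add: zero_le_mult_iff)
  then show ?thesis by simp
qed

lemma step_rel: "t (Suc m) 0 = t m 0 + 2 * t m 1"
  "(int m + 2) * t (Suc m) 1 = (2 * int m + 2) * t m 0 + (int m + 1) * t m 1"
proof -
  show "t (Suc m) 0 = t m 0 + 2 * t m 1" using t_sym[of m 1] by simp
  show "(int m + 2) * t (Suc m) 1 = (2 * int m + 2) * t m 0 + (int m + 1) * t m 1"
    using t2[of m] by (simp add: algebra_simps)
qed

lemma inv:
  assumes "m \<ge> 33"
  shows "10 * int m * t m 1 \<le> (10 * int m - 7) * t m 0 \<and> 5 * int m * t m 1 \<ge> (5 * int m - 4) * t m 0"
  using assms
proof (induction m rule: dec_induct)
  case base
  have "t 33 0 = 470139239360787" "t 33 1 = 459807788441331" using base33 tt_t[of 33] by simp_all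
  then show ?case by simp
next
  case (step m)
  let ?M = "int m" and ?x = "t m 0" and ?y = "t m 1"
  have M: "?M \<ge> 33" using step by simp
  have x: "?x \<ge> 0" using t0_pos[of m] by simp
  have pos: "?M + 2 > 0" by simp
  have U: "10 * (?M + 1) * ((2 * ?M + 2) * ?x + (?M + 1) * ?y) \<le> (10 * ?M + 3) * (?M + 2) * (?x + 2 * ?y)"
    using up_step[OF M x] step.IH by simp
  have Lo: "5 * (?M + 1) * ((2 * ?M + 2) * ?x + (?M + 1) * ?y) \<ge> (5 * ?M + 1) * (?M + 2) * (?x + 2 * ?y)"
    using low_step[OF M x] step.IH by simp
  obtain X Y where XY: "X = t (Suc m) 0" "Y = t (Suc m) 1" by simp
  have sX: "X = ?x + 2 * ?y" using step_rel(1)[of m] XY by simp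
  have sY: "(?M + 2) * Y = (2 * ?M + 2) * ?x + (?M + 1) * ?y" using step_rel(2)[of m] XY by simp
  have r1: "(?M + 2) * (10 * int (Suc m) * Y) = 10 * (?M + 1) * ((2 * ?M + 2) * ?x + (?M + 1) * ?y)"
  proof -
    have "(?M + 2) * (10 * int (Suc m) * Y) = 10 * (?M + 1) * ((?M + 2) * Y)" by (simp add: algebra_simps)
    then show ?thesis unfolding sY .
  qed
  have r2: "(?M + 2) * ((10 * int (Suc m) - 7) * X) = (10 * ?M + 3) * (?M + 2) * (?x + 2 * ?y)"
    unfolding sX by (simp add: algebra_simps)
  have r3: "(?M + 2) * (5 * int (Suc m) * Y) = 5 * (?M + 1) * ((2 * ?M + 2) * ?x + (?M + 1) * ?y)"
  proof -
    have "(?M + 2) * (5 * int (Suc m) * Y) = 5 * (?M + 1) * ((?M + 2) * Y)" by (simp add: algebra_simps)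
    then show ?thesis unfolding sY .
  qed
  have r4: "(?M + 2) * ((5 * int (Suc m) - 4) * X) = (5 * ?M + 1) * (?M + 2) * (?x + 2 * ?y)"
    unfolding sX by (simp add: algebra_simps)
  have "(?M + 2) * (10 * int (Suc m) * Y) \<le> (?M + 2) * ((10 * int (Suc m) - 7) * X)"
    unfolding r1 r2 by (rule U)
  then have A: "10 * int (Suc m) * Y \<le> (10 * int (Suc m) - 7) * X"
    using pos by (simp only: mult_le_cancel_left_pos)
  have "(?M + 2) * (5 * int (Suc m) * Y) \<ge> (?M + 2) * ((5 * int (Suc m) - 4) * X)"
    unfolding r3 r4 by (rule Lo)
  then have B: "5 * int (Suc m) * Y \<ge> (5 * int (Suc m) - 4) * X"
    using pos by (simp only: mult_le_cancel_left_pos)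
  show ?case using A B XY by simp
qed

lemma sgn_large:
  assumes "m \<ge> 14"
  shows "(int m * int m + 3 * int m - 6) * t m 0 - (int m * int m + 3 * int m + 6) * t m 1 > 0"
proof (cases "m < 34")
  case True
  then have "m \<in> set [14..<34]" using assms by (simp only: set_upt atLeastLessThan_iff)
  then have "sgnE m > 0" using small2 unfolding list_all_iff by blast
  then show ?thesis unfolding sgnE_def tt_t by simp
next
  case False
  let ?M = "int m" and ?x = "t m 0" and ?y = "t m 1"
  have M: "?M \<ge> 33" using False by simp
  have x: "?x \<ge> 1" by (rule t0_pos)
  have h: "10 * ?M * ?y \<le> (10 * ?M - 7) * ?x" using inv[of m] False by simp
  have MM: "?M * ?M \<ge> 0" by simp
  have c1: "?M * ?M + 3 * ?M + 6 \<ge> 0" using M MM by linarith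
  have h1: "(?M * ?M + 3 * ?M + 6) * (10 * ?M * ?y) \<le> (?M * ?M + 3 * ?M + 6) * ((10 * ?M - 7) * ?x)"
    using mult_left_mono[OF h c1] .
  have c2: "7 * ?M * ?M - 99 * ?M + 42 > 0"
  proof -
    have "?M * (7 * ?M - 99) \<ge> 33 * 1" using M by (intro mult_mono) auto
    then show ?thesis by (simp add: algebra_simps)
  qed
  have h2: "(7 * ?M * ?M - 99 * ?M + 42) * ?x > 0" using c2 x by simp
  have key: "10 * ?M * ((?M * ?M + 3 * ?M - 6) * ?x - (?M * ?M + 3 * ?M + 6) * ?y)
     = (?M * ?M + 3 * ?M + 6) * ((10 * ?M - 7) * ?x) - (?M * ?M + 3 * ?M + 6) * (10 * ?M * ?y) + (7 * ?M * ?M - 99 * ?M + 42) * ?x"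
    by (simp add: algebra_simps)
  have "10 * ?M * ((?M * ?M + 3 * ?M - 6) * ?x - (?M * ?M + 3 * ?M + 6) * ?y) > 0"
    unfolding key using h1 h2 by linarith
  moreover have "10 * ?M > 0" using M by simp
  ultimately show ?thesis by (simp add: zero_less_mult_iff)
qed

lemma sgn_small:
  assumes "m \<ge> 1" "m < 14"
  shows "(int m * int m + 3 * int m - 6) * t m 0 - (int m * int m + 3 * int m + 6) * t m 1 < 0"
proof -
  have "m \<in> set [1..<14]" using assms by simp
  then have "sgnE m < 0" using small unfolding list_all_iff by blast
  then show ?thesis unfolding sgnE_def tt_t by simp
qed

theorem lemma3p4:
  fixes m :: nat
  assumes "m \<ge> 1"
  shows "Kostka2 (replicate m 2 @ [4]) \<noteq> Kostka2 (replicate m 2 @ [1, 1])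
    \<and> (m < 14 \<longrightarrow> Kostka2 (replicate m 2 @ [4]) < Kostka2 (replicate m 2 @ [1, 1]))
    \<and> (m \<ge> 14 \<longrightarrow> Kostka2 (replicate m 2 @ [4]) > Kostka2 (replicate m 2 @ [1, 1]))"
proof -
  let ?A = "Kostka2 (replicate m 2 @ [4])" and ?B = "Kostka2 (replicate m 2 @ [1, 1])"
  have D: "int ?A - int ?B = 2 * t m 2 - t m 3 - t m 0"
    using K4[OF assms] K11[OF assms] by simp
  have P: "(int m + 2) * (int m + 3) > 0" by simp
  show ?thesis
  proof (cases "m < 14")
    case True
    have "(int m + 2) * (int m + 3) * (2 * t m 2 - t m 3 - t m 0) < 0"
      unfolding rel using sgn_small[OF assms True] .
    then have "2 * t m 2 - t m 3 - t m 0 < 0" using P by (simp add: mult_less_0_iff)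
    then have "?A < ?B" using D by simp
    then show ?thesis using True by simp
  next
    case False
    have "(int m + 2) * (int m + 3) * (2 * t m 2 - t m 3 - t m 0) > 0"
      unfolding rel using sgn_large False by simp
    then have "2 * t m 2 - t m 3 - t m 0 > 0" using P by (simp add: zero_less_mult_iff)
    then have "?A > ?B" using D by simp
    then show ?thesis using False by simp
  qed
qed


end
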